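(* Let $(Y,D)$ be a pair of binary random variables with probability mass function $q_{ij}=\mathbb P(Y=i,D=j)$, $i,j\in\{0,1\}$. Then the following hold. (1) (Validity.) Suppose $(Y_0,Y_1)$ is a pair of $\{0,1\}$-valued random variables defined jointly with $(Y,D)$ such that $(Y,D,Y_0,Y_1)$ satisfies the binary Roy model, or such that there exist real random variables $(Y_0^\ast,Y_1^\ast)$ with $(Y,D,Y_0^\ast,Y_1^\ast)$ satisfying the alternative binary Roy model with $Y_d=1\{Y_d^\ast>0\}$. Then $$0\le \mathbb P(Y_0=1,Y_1=0)\le q_{10},\qquad 0\le \mathbb P(Y_0=0,Y_1=1)\le q_{11},\qquad \mathbb P(Y_0=0,Y_1=0)=q_{00}+q_{01}.$$ (2) (Sharpness.) Conversely, if $(p_{00},p_{01},p_{10})\in\mathbb R^3$ satisfies $0\le p_{10}\le q_{10}$, $0\le p_{01}\le q_{11}$ and $p_{00}=q_{00}+q_{01}$, then there exist, on some probability space, random variables $(\tilde Y,\tilde D,Y_0,Y_1)$ with $(\tilde Y,\tilde D)$ having the same distribution as $(Y,D)$, $Y_0,Y_1\in\{0,1\}$, such that $(\tilde Y,\tilde D,Y_0,Y_1)$ satisfies the binary Roy model (and hence also the alternative binary Roy model, with $Y_d^\ast=Y_d$) and $\mathbb P(Y_0=0,Y_1=0)=p_{00}$, $\mathbb P(Y_0=0,Y_1=1)=p_{01}$, $\mathbb P(Y_0=1,Y_1=0)=p_{10}$.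
   Context: All random variables are defined on a common probability space. The observed variables are an outcome $Y$ and a sector indicator $D\in\{0,1\}$; $(Y_0,Y_1)$ are unobserved potential outcomes. Binary Roy model: $Y_0,Y_1\in\{0,1\}$, $Y=Y_1D+Y_0(1-D)$, and almost surely $Y_1>Y_0\Rightarrow D=1$ and $Y_1<Y_0\Rightarrow D=0$ (nothing is assumed about $D$ when $Y_1=Y_0$). Alternative binary Roy model: $Y=Y_1D+Y_0(1-D)$ where $Y_d=1\{Y_d^\ast>0\}$ for $d=0,1$, for a pair of real random variables $(Y_0^\ast,Y_1^\ast)$ (possibly dependent), and almost surely $Y_1^\ast>Y_0^\ast\Rightarrow D=1$ and $Y_1^\ast<Y_0^\ast\Rightarrow D=0$. *)

theory Defs
  imports "HOL-Probability.Probability"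
begin

definition binary_rv :: "'a measure \<Rightarrow> ('a \<Rightarrow> nat) \<Rightarrow> bool" where
  "binary_rv M X \<longleftrightarrow> X \<in> measurable M (count_space UNIV) \<and> (\<forall>x\<in>space M. X x \<in> {0,1})"

definition binary_roy ::
  "'a measure \<Rightarrow> ('a \<Rightarrow> nat) \<Rightarrow> ('a \<Rightarrow> nat) \<Rightarrow> ('a \<Rightarrow> nat) \<Rightarrow> ('a \<Rightarrow> nat) \<Rightarrow> bool" where
  "binary_roy M Y D Y0 Y1 \<longleftrightarrow>
     binary_rv M Y0 \<and> binary_rv M Y1 \<and>
     (\<forall>x\<in>space M. Y x = Y1 x * D x + Y0 x * (1 - D x)) \<and>
     (AE x in M. Y1 x > Y0 x \<longrightarrow> D x = 1) \<and>
     (AE x in M. Y1 x < Y0 x \<longrightarrow> D x = 0)"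

definition alt_binary_roy ::
  "'a measure \<Rightarrow> ('a \<Rightarrow> nat) \<Rightarrow> ('a \<Rightarrow> nat) \<Rightarrow> ('a \<Rightarrow> real) \<Rightarrow> ('a \<Rightarrow> real) \<Rightarrow> bool" where
  "alt_binary_roy M Y D Y0s Y1s \<longleftrightarrow>
     Y0s \<in> borel_measurable M \<and> Y1s \<in> borel_measurable M \<and>
     (\<forall>x\<in>space M. Y x = (if Y1s x > 0 then 1 else 0) * D x
                        + (if Y0s x > 0 then 1 else 0) * (1 - D x)) \<and>
     (AE x in M. Y1s x > Y0s x \<longrightarrow> D x = 1) \<and>
     (AE x in M. Y1s x < Y0s x \<longrightarrow> D x = 0)"

definition qpmf :: "'a measure \<Rightarrow> ('a \<Rightarrow> nat) \<Rightarrow> ('a \<Rightarrow> nat) \<Rightarrow> nat \<Rightarrow> nat \<Rightarrow> real" where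
  "qpmf M Y D i j = measure M {x\<in>space M. Y x = i \<and> D x = j}"

end

theory Submission
  imports Defs
begin


lemma part1:
  assumes P: "prob_space M" and bY: "binary_rv M Y" and bD: "binary_rv M D"
    and R: "binary_roy M Y D Y0 Y1"
  shows "0 \<le> measure M {x\<in>space M. Y0 x = 1 \<and> Y1 x = 0}
       \<and> measure M {x\<in>space M. Y0 x = 1 \<and> Y1 x = 0} \<le> qpmf M Y D 1 0
       \<and> 0 \<le> measure M {x\<in>space M. Y0 x = 0 \<and> Y1 x = 1}
       \<and> measure M {x\<in>space M. Y0 x = 0 \<and> Y1 x = 1} \<le> qpmf M Y D 1 1
       \<and> measure M {x\<in>space M. Y0 x = 0 \<and> Y1 x = 0} = qpmf M Y D 0 0 + qpmf M Y D 0 1"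
proof -
  interpret prob_space M by (rule P)
  have [measurable]: "Y \<in> measurable M (count_space UNIV)" "D \<in> measurable M (count_space UNIV)"
    "Y0 \<in> measurable M (count_space UNIV)" "Y1 \<in> measurable M (count_space UNIV)"
    using bY bD R by (auto simp: binary_rv_def binary_roy_def)
  have vals: "\<And>x. x \<in> space M \<Longrightarrow> Y x \<in> {0,1} \<and> D x \<in> {0,1} \<and> Y0 x \<in> {0,1} \<and> Y1 x \<in> {0,1}
      \<and> Y x = Y1 x * D x + Y0 x * (1 - D x)"
    using bY bD R by (auto simp: binary_rv_def binary_roy_def)
  have ae: "AE x in M. (Y1 x > Y0 x \<longrightarrow> D x = 1) \<and> (Y1 x < Y0 x \<longrightarrow> D x = 0)"
    using R by (auto simp: binary_roy_def)
  have e1: "measure M {x\<in>space M. Y0 x = 1 \<and> Y1 x = 0} = measure M ({x\<in>space M. Y0 x = 1 \<and> Y1 x = 0} \<inter> {x\<in>space M. Y x = 1 \<and> D x = 0})"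
    apply (rule measure_eq_AE)
      apply (rule eventually_mono[OF eventually_conj[OF ae AE_space]])
    using vals by auto
  have e2: "measure M {x\<in>space M. Y0 x = 0 \<and> Y1 x = 1} = measure M ({x\<in>space M. Y0 x = 0 \<and> Y1 x = 1} \<inter> {x\<in>space M. Y x = 1 \<and> D x = 1})"
    apply (rule measure_eq_AE)
      apply (rule eventually_mono[OF eventually_conj[OF ae AE_space]])
    using vals by auto
  have e3: "measure M {x\<in>space M. Y0 x = 0 \<and> Y1 x = 0} = measure M ({x\<in>space M. Y x = 0 \<and> D x = 0} \<union> {x\<in>space M. Y x = 0 \<and> D x = 1})"
    apply (rule measure_eq_AE)
      apply (rule eventually_mono[OF eventually_conj[OF ae AE_space]])
      subgoal for x
    using vals[of x] by (elim conjE; cases "Y0 x = 0"; cases "Y1 x = 0"; cases "D x = 0"; auto)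
  by auto
  have e4: "measure M ({x\<in>space M. Y x = 0 \<and> D x = 0} \<union> {x\<in>space M. Y x = 0 \<and> D x = 1})
     = qpmf M Y D 0 0 + qpmf M Y D 0 1"
    unfolding qpmf_def by (rule finite_measure_Union) auto
  have m1: "measure M ({x\<in>space M. Y0 x = 1 \<and> Y1 x = 0} \<inter> {x\<in>space M. Y x = 1 \<and> D x = 0}) \<le> qpmf M Y D 1 0"
    unfolding qpmf_def by (rule finite_measure_mono) auto
  have m2: "measure M ({x\<in>space M. Y0 x = 0 \<and> Y1 x = 1} \<inter> {x\<in>space M. Y x = 1 \<and> D x = 1}) \<le> qpmf M Y D 1 1"
    unfolding qpmf_def by (rule finite_measure_mono) auto
  show ?thesis using e1 e2 e3 e4 m1 m2 by simp
qed

lemma alt_to_roy: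
  assumes "binary_rv M Y0" "binary_rv M Y1" "alt_binary_roy M Y D Y0s Y1s"
    "\<forall>x\<in>space M. Y0 x = (if Y0s x > 0 then 1 else 0) \<and> Y1 x = (if Y1s x > 0 then 1 else 0)"
  shows "binary_roy M Y D Y0 Y1"
proof -
  have a1: "AE x in M. Y1s x > Y0s x \<longrightarrow> D x = 1" and a2: "AE x in M. Y1s x < Y0s x \<longrightarrow> D x = 0"
    using assms(3) by (auto simp: alt_binary_roy_def)
  show ?thesis unfolding binary_roy_def
  proof (intro conjI)
    show "\<forall>x\<in>space M. Y x = Y1 x * D x + Y0 x * (1 - D x)"
      using assms(3,4) by (auto simp: alt_binary_roy_def)
    show "AE x in M. Y1 x > Y0 x \<longrightarrow> D x = 1"
      by (rule eventually_mono[OF eventually_conj[OF a1 AE_space]]) (use assms(4) in \<open>auto split: if_splits\<close>)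
    show "AE x in M. Y1 x < Y0 x \<longrightarrow> D x = 0"
      by (rule eventually_mono[OF eventually_conj[OF a2 AE_space]]) (use assms(4) in \<open>auto split: if_splits\<close>)
  qed (use assms in auto)
qed


lemma embed_finite:
  fixes f :: "'b \<Rightarrow> real"
  assumes S: "finite S" and nn: "\<And>x. 0 \<le> f x" and z: "\<And>x. x \<notin> S \<Longrightarrow> f x = 0" and s1: "sum f S = 1"
  shows "(\<integral>\<^sup>+x. f x \<partial>count_space UNIV) = 1"
    and "measure (measure_pmf (embed_pmf f)) A = sum f (S \<inter> A)"
proof -
  show pr: "(\<integral>\<^sup>+x. f x \<partial>count_space UNIV) = 1"
    using nn_integral_count_space'[of S UNIV "\<lambda>x. ennreal (f x)"] S z s1
    by (simp add: sum_ennreal[symmetric] nn)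
  have sp: "set_pmf (embed_pmf f) \<subseteq> S"
    using set_embed_pmf[OF nn pr] z by auto
  have "measure (measure_pmf (embed_pmf f)) A = measure (measure_pmf (embed_pmf f)) (A \<inter> set_pmf (embed_pmf f))"
    by (simp add: measure_Int_set_pmf)
  also have "A \<inter> set_pmf (embed_pmf f) = (S \<inter> A) \<inter> set_pmf (embed_pmf f)" using sp by auto
  also have "measure (measure_pmf (embed_pmf f)) \<dots> = measure (measure_pmf (embed_pmf f)) (S \<inter> A)"
    by (simp add: measure_Int_set_pmf)
  also have "\<dots> = sum (pmf (embed_pmf f)) (S \<inter> A)"
    using S by (simp add: measure_measure_pmf_finite)
  also have "\<dots> = sum f (S \<inter> A)" using pmf_embed_pmf[OF nn pr] by simp
  finally show "measure (measure_pmf (embed_pmf f)) A = sum f (S \<inter> A)" .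
qed

lemma qsum:
  assumes P: "prob_space M" and bY: "binary_rv M Y" and bD: "binary_rv M D"
  shows "qpmf M Y D 0 0 + qpmf M Y D 0 1 + qpmf M Y D 1 0 + qpmf M Y D 1 1 = 1"
proof -
  interpret prob_space M by (rule P)
  have [measurable]: "Y \<in> measurable M (count_space UNIV)" "D \<in> measurable M (count_space UNIV)"
    using bY bD by (auto simp: binary_rv_def)
  let ?B = "\<lambda>i j. {x\<in>space M. Y x = i \<and> D x = j}"
  have sp: "space M = (?B 0 0 \<union> ?B 0 1) \<union> (?B 1 0 \<union> ?B 1 1)"
    using bY bD by (auto simp: binary_rv_def)
  have "1 = measure M (space M)" using prob_space by simp
  also have "\<dots> = measure M (?B 0 0 \<union> ?B 0 1) + measure M (?B 1 0 \<union> ?B 1 1)"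
    by (subst sp, rule finite_measure_Union) auto
  also have "\<dots> = (measure M (?B 0 0) + measure M (?B 0 1)) + (measure M (?B 1 0) + measure M (?B 1 1))"
    by (subst finite_measure_Union, auto)+
  finally show ?thesis unfolding qpmf_def by simp
qed

lemma part2:
  assumes P: "prob_space M" and bY: "binary_rv M Y" and bD: "binary_rv M D"
    and h: "0 \<le> p10 \<and> p10 \<le> qpmf M Y D 1 0 \<and> 0 \<le> p01 \<and> p01 \<le> qpmf M Y D 1 1
       \<and> p00 = qpmf M Y D 0 0 + qpmf M Y D 0 1"
  shows "\<exists>(N :: (nat \<times> nat \<times> nat \<times> nat) measure) Yt Dt Y0 Y1.
        prob_space N \<and> binary_rv N Yt \<and> binary_rv N Dt \<and>
        distr N (count_space UNIV) (\<lambda>x. (Yt x, Dt x)) = distr M (count_space UNIV) (\<lambda>x. (Y x, D x)) \<and>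
        binary_roy N Yt Dt Y0 Y1 \<and>
        alt_binary_roy N Yt Dt (\<lambda>x. real (Y0 x)) (\<lambda>x. real (Y1 x)) \<and>
        measure N {x\<in>space N. Y0 x = 0 \<and> Y1 x = 0} = p00 \<and>
        measure N {x\<in>space N. Y0 x = 0 \<and> Y1 x = 1} = p01 \<and>
        measure N {x\<in>space N. Y0 x = 1 \<and> Y1 x = 0} = p10"
proof -
  interpret prob_space M by (rule P)
  define q where "q = qpmf M Y D"
  have qnn: "\<And>i j. 0 \<le> q i j" unfolding q_def qpmf_def by simp
  have qs: "q 0 0 + q 0 1 + q 1 0 + q 1 1 = 1" unfolding q_def by (rule qsum[OF P bY bD])
  define S :: "(nat \<times> nat \<times> nat \<times> nat) set" where
    "S = {(0,0,0,0), (0,1,0,0), (1,0,1,0), (1,0,1,1), (1,1,0,1), (1,1,1,1)}"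
  define f :: "nat \<times> nat \<times> nat \<times> nat \<Rightarrow> real" where
    "f x = (if x = (0,0,0,0) then q 0 0 else if x = (0,1,0,0) then q 0 1
       else if x = (1,0,1,0) then p10 else if x = (1,0,1,1) then q 1 0 - p10
       else if x = (1,1,0,1) then p01 else if x = (1,1,1,1) then q 1 1 - p01 else 0)" for x
  have fnn: "\<And>x. 0 \<le> f x" using h qnn unfolding f_def q_def by auto
  have fz: "\<And>x. x \<notin> S \<Longrightarrow> f x = 0" unfolding f_def S_def by auto
  have fin: "finite S" unfolding S_def by simp
  have fs: "sum f S = 1" using qs unfolding S_def f_def by simp
  note E = embed_finite[OF fin fnn fz fs]
  define N where "N = measure_pmf (embed_pmf f)"
  define Dt :: "nat \<times> nat \<times> nat \<times> nat \<Rightarrow> nat" where "Dt x = min 1 (fst (snd x))" for x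
  define Y0 :: "nat \<times> nat \<times> nat \<times> nat \<Rightarrow> nat" where "Y0 x = min 1 (fst (snd (snd x)))" for x
  define Y1 :: "nat \<times> nat \<times> nat \<times> nat \<Rightarrow> nat" where "Y1 x = min 1 (snd (snd (snd x)))" for x
  define Yt where "Yt x = Y1 x * Dt x + Y0 x * (1 - Dt x)" for x
  have meas: "\<And>A. measure N A = sum f (S \<inter> A)" unfolding N_def by (rule E(2))
  have setN: "set_pmf (embed_pmf f) \<subseteq> S" using set_embed_pmf[OF fnn E(1)] fz by blast
  have bin: "\<And>g. (\<And>x. g x \<in> {0,1}) \<Longrightarrow> binary_rv N g" unfolding binary_rv_def N_def by auto
  have v: "\<And>x. Dt x \<in> {0,1}" "\<And>x. Y0 x \<in> {0,1}" "\<And>x. Y1 x \<in> {0,1}" "\<And>x. Yt x \<in> {0,1}"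
  proof -
    show a: "\<And>x. Dt x \<in> {0,1}" "\<And>x. Y0 x \<in> {0,1}" "\<And>x. Y1 x \<in> {0,1}"
      unfolding Dt_def Y0_def Y1_def by (auto simp: min_def)
    fix x show "Yt x \<in> {0,1}" using a[of x] unfolding Yt_def by auto
  qed
  have ae: "\<And>Q. (\<And>x. x \<in> S \<Longrightarrow> Q x) \<Longrightarrow> AE x in N. Q x"
    unfolding N_def using setN by (auto simp: AE_measure_pmf_iff)
  have roy: "binary_roy N Yt Dt Y0 Y1"
    unfolding binary_roy_def
    by (intro conjI bin v ae) (auto simp: Yt_def S_def Dt_def Y0_def Y1_def)
  have alt: "alt_binary_roy N Yt Dt (\<lambda>x. real (Y0 x)) (\<lambda>x. real (Y1 x))"
    unfolding alt_binary_roy_def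
  proof (intro conjI ballI ae)
    fix x show "Yt x = (if real (Y1 x) > 0 then 1 else 0) * Dt x + (if real (Y0 x) > 0 then 1 else 0) * (1 - Dt x)"
      using v(2,3)[of x] unfolding Yt_def by auto
  qed (auto simp: N_def S_def Dt_def Y0_def Y1_def)
  have dist: "distr N (count_space UNIV) (\<lambda>x. (Yt x, Dt x)) = distr M (count_space UNIV) (\<lambda>x. (Y x, D x))"
  proof (rule measure_eqI_countable[where A=UNIV])
    fix a :: "nat \<times> nat"
    obtain i j where a: "a = (i,j)" by (cases a)
    have mM: "(\<lambda>x. (Y x, D x)) \<in> measurable M (count_space UNIV)"
      using bY bD by (auto simp: binary_rv_def)
    have l: "emeasure (distr N (count_space UNIV) (\<lambda>x. (Yt x, Dt x))) {a} = ennreal (sum f (S \<inter> {x. Yt x = i \<and> Dt x = j}))"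
      by (subst emeasure_distr) (auto simp: N_def measure_pmf.emeasure_eq_measure meas[unfolded N_def, symmetric] a vimage_def)
    have r: "emeasure (distr M (count_space UNIV) (\<lambda>x. (Y x, D x))) {a} = ennreal (qpmf M Y D i j)"
      using mM by (subst emeasure_distr) (auto simp: emeasure_eq_measure qpmf_def a vimage_def Int_def conj_commute)
    have "sum f (S \<inter> {x. Yt x = i \<and> Dt x = j}) = q i j"
    proof -
      have c: "(i = 0 \<or> i = 1 \<or> i \<ge> 2) \<and> (j = 0 \<or> j = 1 \<or> j \<ge> 2)" by auto
      have q2: "\<And>i j. i \<ge> 2 \<or> j \<ge> 2 \<Longrightarrow> q i j = 0"
      proof -
        fix i j :: nat assume "i \<ge> 2 \<or> j \<ge> 2"
        hence "{x\<in>space M. Y x = i \<and> D x = j} = {}" using bY bD by (auto simp: binary_rv_def)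
        thus "q i j = 0" unfolding q_def qpmf_def by (simp only:) simp
      qed
      show ?thesis using c
        by (elim conjE disjE) (auto simp: q2 S_def f_def Yt_def Dt_def Y0_def Y1_def)
    qed
    thus "emeasure (distr N (count_space UNIV) (\<lambda>x. (Yt x, Dt x))) {a} = emeasure (distr M (count_space UNIV) (\<lambda>x. (Y x, D x))) {a}"
      using l r by (simp add: q_def)
  qed (auto)
  have spN: "space N = UNIV" by (simp add: N_def)
  have m00: "measure N {x\<in>space N. Y0 x = 0 \<and> Y1 x = 0} = p00"
    using h unfolding meas by (simp add: S_def f_def Y0_def Y1_def q_def spN Int_insert_left)
  have m01: "measure N {x\<in>space N. Y0 x = 0 \<and> Y1 x = 1} = p01"
    unfolding meas by (simp add: S_def f_def Y0_def Y1_def spN Int_insert_left)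
  have m10: "measure N {x\<in>space N. Y0 x = 1 \<and> Y1 x = 0} = p10"
    unfolding meas by (simp add: S_def f_def Y0_def Y1_def spN Int_insert_left)
  show ?thesis
    apply (rule exI[of _ N], rule exI[of _ Yt], rule exI[of _ Dt], rule exI[of _ Y0], rule exI[of _ Y1])
    using roy alt dist m00 m01 m10 bin[OF v(4)] bin[OF v(1)] by (simp add: N_def measure_pmf.prob_space_axioms)
qed
theorem theorem1:
  fixes M :: "'a measure" and Y D :: "'a \<Rightarrow> nat"
  assumes "prob_space M"
    and "binary_rv M Y" and "binary_rv M D"
  shows
   "(\<forall>Y0 Y1. binary_rv M Y0 \<and> binary_rv M Y1 \<and>
       (binary_roy M Y D Y0 Y1 \<or>
        (\<exists>Y0s Y1s. alt_binary_roy M Y D Y0s Y1s \<and>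
           (\<forall>x\<in>space M. Y0 x = (if Y0s x > 0 then 1 else 0) \<and>
                         Y1 x = (if Y1s x > 0 then 1 else 0))))
     \<longrightarrow> 0 \<le> measure M {x\<in>space M. Y0 x = 1 \<and> Y1 x = 0}
       \<and> measure M {x\<in>space M. Y0 x = 1 \<and> Y1 x = 0} \<le> qpmf M Y D 1 0
       \<and> 0 \<le> measure M {x\<in>space M. Y0 x = 0 \<and> Y1 x = 1}
       \<and> measure M {x\<in>space M. Y0 x = 0 \<and> Y1 x = 1} \<le> qpmf M Y D 1 1
       \<and> measure M {x\<in>space M. Y0 x = 0 \<and> Y1 x = 0} = qpmf M Y D 0 0 + qpmf M Y D 0 1)
  \<and>
   (\<forall>p00 p01 p10 :: real.
       0 \<le> p10 \<and> p10 \<le> qpmf M Y D 1 0 \<and> 0 \<le> p01 \<and> p01 \<le> qpmf M Y D 1 1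
       \<and> p00 = qpmf M Y D 0 0 + qpmf M Y D 0 1 \<longrightarrow>
     (\<exists>(N :: (nat \<times> nat \<times> nat \<times> nat) measure) Yt Dt Y0 Y1.
        prob_space N \<and> binary_rv N Yt \<and> binary_rv N Dt \<and>
        distr N (count_space UNIV) (\<lambda>x. (Yt x, Dt x)) = distr M (count_space UNIV) (\<lambda>x. (Y x, D x)) \<and>
        binary_roy N Yt Dt Y0 Y1 \<and>
        alt_binary_roy N Yt Dt (\<lambda>x. real (Y0 x)) (\<lambda>x. real (Y1 x)) \<and>
        measure N {x\<in>space N. Y0 x = 0 \<and> Y1 x = 0} = p00 \<and>
        measure N {x\<in>space N. Y0 x = 0 \<and> Y1 x = 1} = p01 \<and>
        measure N {x\<in>space N. Y0 x = 1 \<and> Y1 x = 0} = p10))"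
  proof (intro conjI allI impI)
  fix Y0 Y1 assume a: "binary_rv M Y0 \<and> binary_rv M Y1 \<and>
       (binary_roy M Y D Y0 Y1 \<or>
        (\<exists>Y0s Y1s. alt_binary_roy M Y D Y0s Y1s \<and>
           (\<forall>x\<in>space M. Y0 x = (if Y0s x > 0 then 1 else 0) \<and>
                         Y1 x = (if Y1s x > 0 then 1 else 0))))"
  have R: "binary_roy M Y D Y0 Y1" using a alt_to_roy by blast
  note P = part1[OF assms R]
  show "0 \<le> measure M {x\<in>space M. Y0 x = 1 \<and> Y1 x = 0}" using P by blast
  show "measure M {x\<in>space M. Y0 x = 1 \<and> Y1 x = 0} \<le> qpmf M Y D 1 0" using P by blast
  show "0 \<le> measure M {x\<in>space M. Y0 x = 0 \<and> Y1 x = 1}" using P by blast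
  show "measure M {x\<in>space M. Y0 x = 0 \<and> Y1 x = 1} \<le> qpmf M Y D 1 1" using P by blast
  show "measure M {x\<in>space M. Y0 x = 0 \<and> Y1 x = 0} = qpmf M Y D 0 0 + qpmf M Y D 0 1" using P by blast
next
  fix p00 p01 p10 :: real
  assume h: "0 \<le> p10 \<and> p10 \<le> qpmf M Y D 1 0 \<and> 0 \<le> p01 \<and> p01 \<le> qpmf M Y D 1 1
       \<and> p00 = qpmf M Y D 0 0 + qpmf M Y D 0 1"
  show "\<exists>(N :: (nat \<times> nat \<times> nat \<times> nat) measure) Yt Dt Y0 Y1.
        prob_space N \<and> binary_rv N Yt \<and> binary_rv N Dt \<and>
        distr N (count_space UNIV) (\<lambda>x. (Yt x, Dt x)) = distr M (count_space UNIV) (\<lambda>x. (Y x, D x)) \<and>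
        binary_roy N Yt Dt Y0 Y1 \<and>
        alt_binary_roy N Yt Dt (\<lambda>x. real (Y0 x)) (\<lambda>x. real (Y1 x)) \<and>
        measure N {x\<in>space N. Y0 x = 0 \<and> Y1 x = 0} = p00 \<and>
        measure N {x\<in>space N. Y0 x = 0 \<and> Y1 x = 1} = p01 \<and>
        measure N {x\<in>space N. Y0 x = 1 \<and> Y1 x = 0} = p10"
    by (rule part2[OF assms h])
qed

end
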